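(* Let $\mathbb{F}\in\{\mathbb{R},\mathbb{C}\}$ and let $\mathcal{P}(M,N)$ be the set of Parseval frames for $\mathbb{F}^N$ consisting of $M$ vectors. If $\Phi=\{\varphi_i\}_{i=1}^M\in\mathcal{P}(M,N)$ is an equiangular Parseval frame and $\Psi=\{\psi_i\}_{i=1}^M\in\mathcal{P}(M,N)$, then $TC(\Psi)\leq TC(\Phi)$. Consequently, when an equiangular Parseval frame exists in $\mathcal{P}(M,N)$, the maximizers of $TC$ over $\mathcal{P}(M,N)$ (equivalently, the maximizers of $\sum_{i,j}|\langle\varphi_i,\varphi_j\rangle|$ over $\mathcal{P}(M,N)$) are precisely the equiangular Parseval frames in $\mathcal{P}(M,N)$.
   Context: A Parseval frame for $\mathbb{F}^N$ is a family $\Phi=\{\varphi_i\}_{i=1}^M\subseteq\mathbb{F}^N$ whose $N\times M$ matrix (columns $\varphi_i$) satisfies $\Phi\Phi^*=I$. A Parseval frame is equiangular if $\|\varphi_i\|=\|\varphi_j\|$ for all $i,j$ and there is a constant $c$ with $|\langle\varphi_i,\varphi_j\rangle|=c$ for all $i\neq j$. The total coherence is $TC(\Phi)=\sum_{i\neq j}|\langle\varphi_i,\varphi_j\rangle|$. *)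

theory Defs
  imports Complex_Main
begin

text \<open>A family of M vectors in F^N (F = R or C, embedded in C^N) is a function
  Phi :: nat => nat => complex, where Phi i is the i-th vector (i < M) and
  Phi i k is its k-th coordinate (k < N). The scalar field is represented by
  the set K of allowed coordinates: K = Reals (F = R) or K = UNIV (F = C).\<close>

definition vinner :: "nat \<Rightarrow> (nat \<Rightarrow> complex) \<Rightarrow> (nat \<Rightarrow> complex) \<Rightarrow> complex" where
  "vinner N x y = (\<Sum>k<N. x k * cnj (y k))"

definition vnorm :: "nat \<Rightarrow> (nat \<Rightarrow> complex) \<Rightarrow> real" where
  "vnorm N x = sqrt (\<Sum>k<N. (cmod (x k))\<^sup>2)"

text \<open>Parseval frame: the N x M synthesis matrix (columns Phi i) satisfies
  Phi Phi^* = I, i.e. entry (k,l) is sum_i Phi_i(k) * conj(Phi_i(l)).\<close>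
definition parseval_frame :: "complex set \<Rightarrow> nat \<Rightarrow> nat \<Rightarrow> (nat \<Rightarrow> nat \<Rightarrow> complex) \<Rightarrow> bool" where
  "parseval_frame K N M Phi \<longleftrightarrow>
     (\<forall>i<M. \<forall>k<N. Phi i k \<in> K) \<and>
     (\<forall>k<N. \<forall>l<N. (\<Sum>i<M. Phi i k * cnj (Phi i l)) = (if k = l then 1 else 0))"

definition equiangular :: "nat \<Rightarrow> nat \<Rightarrow> (nat \<Rightarrow> nat \<Rightarrow> complex) \<Rightarrow> bool" where
  "equiangular N M Phi \<longleftrightarrow>
     (\<forall>i<M. \<forall>j<M. vnorm N (Phi i) = vnorm N (Phi j)) \<and>
     (\<exists>c. \<forall>i<M. \<forall>j<M. i \<noteq> j \<longrightarrow> cmod (vinner N (Phi i) (Phi j)) = c)"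

definition TC :: "nat \<Rightarrow> nat \<Rightarrow> (nat \<Rightarrow> nat \<Rightarrow> complex) \<Rightarrow> real" where
  "TC N M Phi = (\<Sum>i<M. \<Sum>j<M. if i \<noteq> j then cmod (vinner N (Phi i) (Phi j)) else 0)"

definition TC_full :: "nat \<Rightarrow> nat \<Rightarrow> (nat \<Rightarrow> nat \<Rightarrow> complex) \<Rightarrow> real" where
  "TC_full N M Phi = (\<Sum>i<M. \<Sum>j<M. cmod (vinner N (Phi i) (Phi j)))"

end

theory Submission
  imports Defs
begin

lemma var_id:
  fixes f :: "'a \<Rightarrow> real"
  assumes "finite A" "A \<noteq> {}"
  shows "(\<Sum>x\<in>A. (f x - sum f A / card A)^2) = (\<Sum>x\<in>A. (f x)^2) - (sum f A)^2 / card A"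
proof -
  have n: "real (card A) > 0" using assms(1,2) by auto
  have "(\<Sum>x\<in>A. (f x - sum f A / card A)^2) = (\<Sum>x\<in>A. (f x)^2 - 2 * (sum f A / card A) * f x + (sum f A / card A)^2)"
    by (rule sum.cong) (auto simp: power2_diff)
  also have "\<dots> = (\<Sum>x\<in>A. (f x)^2) - 2 * (sum f A / card A) * sum f A + card A * (sum f A / card A)^2"
    by (simp add: sum.distrib sum_subtractf sum_distrib_left)
  also have "\<dots> = (\<Sum>x\<in>A. (f x)^2) - (sum f A)^2 / card A"
    using n by (simp add: field_simps power2_eq_square)
  finally show ?thesis .
qed

lemma cs_le:
  fixes f :: "'a \<Rightarrow> real"
  assumes "finite A"
  shows "(sum f A)^2 \<le> card A * (\<Sum>x\<in>A. (f x)^2)"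
proof (cases "A = {}")
  case True then show ?thesis by simp
next
  case False
  have n: "real (card A) > 0" using assms False by auto
  have "0 \<le> (\<Sum>x\<in>A. (f x - sum f A / card A)^2)" by (simp add: sum_nonneg)
  then have "(sum f A)^2 / card A \<le> (\<Sum>x\<in>A. (f x)^2)" using var_id[OF assms False, of f] by linarith
  then show ?thesis using n by (simp add: pos_divide_le_eq mult.commute)
qed

lemma cs_eq:
  fixes f :: "'a \<Rightarrow> real"
  assumes "finite A" "A \<noteq> {}" "(sum f A)^2 = card A * (\<Sum>x\<in>A. (f x)^2)" "x \<in> A"
  shows "f x = sum f A / card A"
proof -
  have n: "real (card A) > 0" using assms(1,2) by auto
  have e: "(sum f A)^2 / card A = (\<Sum>x\<in>A. (f x)^2)" unfolding assms(3) using n by simp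
  have "(\<Sum>x\<in>A. (f x - sum f A / card A)^2) = 0" unfolding var_id[OF assms(1,2), of f] e by simp
  moreover have "\<forall>y\<in>A. 0 \<le> (f y - sum f A / card A)^2" by simp
  ultimately have "\<forall>y\<in>A. (f y - sum f A / card A)^2 = 0"
    using sum_nonneg_eq_0_iff[OF assms(1), of "\<lambda>y. (f y - sum f A / card A)^2"] by blast
  then have "(f x - sum f A / card A)^2 = 0" using assms(4) by blast
  then show ?thesis by simp
qed

definition offd :: "nat \<Rightarrow> (nat \<times> nat) set" where
  "offd M = {p \<in> {..<M} \<times> {..<M}. fst p \<noteq> snd p}"

lemma offd_finite: "finite (offd M)" unfolding offd_def by auto

lemma offd_sum: "(\<Sum>i<M. \<Sum>j<M. if i \<noteq> j then h i j else 0) = (\<Sum>p\<in>offd M. h (fst p) (snd p))"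
proof -
  have "(\<Sum>i<M. \<Sum>j<M. if i \<noteq> j then h i j else 0) = (\<Sum>p\<in>{..<M} \<times> {..<M}. if fst p \<noteq> snd p then h (fst p) (snd p) else 0)"
    by (simp add: sum.cartesian_product case_prod_beta)
  also have "\<dots> = (\<Sum>p\<in>offd M. h (fst p) (snd p))"
    unfolding offd_def by (simp add: sum.inter_filter)
  finally show ?thesis .
qed

lemma offd_card: "card (offd M) = M * M - M"
proof -
  have e: "offd M = {..<M} \<times> {..<M} - (\<lambda>i. (i, i)) ` {..<M}" unfolding offd_def by auto
  have "card ((\<lambda>i. (i, i)) ` {..<M}) = M" by (subst card_image) (auto simp: inj_on_def)
  then show ?thesis unfolding e by (subst card_Diff_subset) (auto simp: card_cartesian_product)
qed

lemma cns: "(complex_of_real (cmod z))^2 = z * cnj z"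
  using complex_norm_square[of z] by simp

lemma frame_sq:
  assumes "parseval_frame K N M Psi"
  shows "(\<Sum>i<M. \<Sum>j<M. (cmod (vinner N (Psi i) (Psi j)))^2) = real N"
proof -
  have pf: "\<And>k l. k < N \<Longrightarrow> l < N \<Longrightarrow> (\<Sum>i<M. Psi i k * cnj (Psi i l)) = (if k = l then 1 else 0)"
    using assms unfolding parseval_frame_def by blast
  have 1: "complex_of_real ((cmod (vinner N (Psi i) (Psi j)))^2) =
     (\<Sum>k<N. \<Sum>l<N. (Psi i k * cnj (Psi i l)) * (Psi j l * cnj (Psi j k)))" for i j
    unfolding vinner_def
    by (simp add: cns sum_product cnj_sum mult_ac)
  have "complex_of_real (\<Sum>i<M. \<Sum>j<M. (cmod (vinner N (Psi i) (Psi j)))^2)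
     = (\<Sum>i<M. \<Sum>j<M. \<Sum>k<N. \<Sum>l<N. (Psi i k * cnj (Psi i l)) * (Psi j l * cnj (Psi j k)))"
    by (simp only: of_real_sum 1)
  also have "\<dots> = (\<Sum>k<N. \<Sum>l<N. \<Sum>i<M. \<Sum>j<M. (Psi i k * cnj (Psi i l)) * (Psi j l * cnj (Psi j k)))"
    apply (subst (2) sum.swap) apply (subst (3) sum.swap) apply (subst sum.swap) apply (subst (2) sum.swap) ..
  also have "\<dots> = (\<Sum>k<N. \<Sum>l<N. (\<Sum>i<M. Psi i k * cnj (Psi i l)) * (\<Sum>j<M. Psi j l * cnj (Psi j k)))"
    by (simp add: sum_product)
  also have "\<dots> = (\<Sum>k<N. \<Sum>l<N. (if k = l then 1 else 0))"
    by (intro sum.cong refl) (simp add: pf)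
  also have "\<dots> = complex_of_real (real N)" by simp
  finally show ?thesis by (simp only: of_real_eq_iff)
qed

lemma diag_eq: "cmod (vinner N x x) = (vnorm N x)^2"
proof -
  have "vinner N x x = complex_of_real (\<Sum>k<N. (cmod (x k))^2)"
    unfolding vinner_def by (simp add: cns)
  then have "cmod (vinner N x x) = \<bar>\<Sum>k<N. (cmod (x k))^2\<bar>" by (simp only: norm_of_real)
  also have "\<dots> = (\<Sum>k<N. (cmod (x k))^2)" by (simp add: sum_nonneg)
  also have "\<dots> = (vnorm N x)^2" unfolding vnorm_def by (simp add: sum_nonneg)
  finally show ?thesis .
qed

lemma frame_diag:
  assumes "parseval_frame K N M Psi"
  shows "(\<Sum>i<M. (vnorm N (Psi i))^2) = real N"
proof -
  have pf: "\<And>k. k < N \<Longrightarrow> (\<Sum>i<M. Psi i k * cnj (Psi i k)) = 1"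
    using assms unfolding parseval_frame_def by simp
  have "complex_of_real (\<Sum>i<M. (vnorm N (Psi i))^2) = (\<Sum>i<M. \<Sum>k<N. Psi i k * cnj (Psi i k))"
    unfolding vnorm_def by (simp add: sum_nonneg cns)
  also have "\<dots> = (\<Sum>k<N. \<Sum>i<M. Psi i k * cnj (Psi i k))" by (rule sum.swap)
  also have "\<dots> = complex_of_real (real N)" by (simp add: pf)
  finally show ?thesis by (simp only: of_real_eq_iff)
qed


lemma basics:
  assumes "parseval_frame K N M Psi"
  shows "TC N M Psi = (\<Sum>p\<in>offd M. cmod (vinner N (Psi (fst p)) (Psi (snd p))))"
    and "(\<Sum>p\<in>offd M. (cmod (vinner N (Psi (fst p)) (Psi (snd p))))^2) = real N - (\<Sum>i<M. ((vnorm N (Psi i))^2)^2)"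
    and "(\<Sum>i<M. (vnorm N (Psi i))^2) = real N"
    and "TC_full N M Psi = TC N M Psi + real N"
proof -
  show "TC N M Psi = (\<Sum>p\<in>offd M. cmod (vinner N (Psi (fst p)) (Psi (snd p))))"
    unfolding TC_def by (rule offd_sum)
  show d: "(\<Sum>i<M. (vnorm N (Psi i))^2) = real N" by (rule frame_diag[OF assms])
  have split: "(\<Sum>j<M. h i j) = (\<Sum>j<M. if i \<noteq> j then h i j else 0) + h i i"
    if "i < M" for i and h :: "nat \<Rightarrow> nat \<Rightarrow> real"
  proof -
    have "(\<Sum>j<M. h i j) = (\<Sum>j<M. (if i \<noteq> j then h i j else 0) + (if i = j then h i j else 0))"
      by (rule sum.cong) auto
    also have "\<dots> = (\<Sum>j<M. if i \<noteq> j then h i j else 0) + h i i"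
      using that by (simp add: sum.distrib)
    finally show ?thesis .
  qed
  have "real N = (\<Sum>i<M. \<Sum>j<M. (cmod (vinner N (Psi i) (Psi j)))^2)"
    using frame_sq[OF assms] by simp
  also have "\<dots> = (\<Sum>i<M. (\<Sum>j<M. if i \<noteq> j then (cmod (vinner N (Psi i) (Psi j)))^2 else 0)
        + (cmod (vinner N (Psi i) (Psi i)))^2)"
    by (rule sum.cong[OF refl], rule split) simp
  also have "\<dots> = (\<Sum>p\<in>offd M. (cmod (vinner N (Psi (fst p)) (Psi (snd p))))^2) + (\<Sum>i<M. ((vnorm N (Psi i))^2)^2)"
    by (simp add: sum.distrib offd_sum diag_eq)
  finally show "(\<Sum>p\<in>offd M. (cmod (vinner N (Psi (fst p)) (Psi (snd p))))^2) = real N - (\<Sum>i<M. ((vnorm N (Psi i))^2)^2)"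
    by simp
  have "TC_full N M Psi = (\<Sum>i<M. (\<Sum>j<M. if i \<noteq> j then cmod (vinner N (Psi i) (Psi j)) else 0)
        + cmod (vinner N (Psi i) (Psi i)))"
    unfolding TC_full_def by (rule sum.cong[OF refl], rule split) simp
  also have "\<dots> = TC N M Psi + real N"
    unfolding TC_def by (simp add: sum.distrib diag_eq d)
  finally show "TC_full N M Psi = TC N M Psi + real N" .
qed

definition B2 :: "nat \<Rightarrow> nat \<Rightarrow> real" where
  "B2 M N = real (M * M - M) * (real N - (real N)^2 / real M)"

lemma powmean:
  assumes "parseval_frame K N M Psi" "M > 0"
  shows "(real N)^2 / real M \<le> (\<Sum>i<M. ((vnorm N (Psi i))^2)^2)"
proof -
  have "(real N)^2 \<le> real M * (\<Sum>i<M. ((vnorm N (Psi i))^2)^2)"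
    using cs_le[of "{..<M}" "\<lambda>i. (vnorm N (Psi i))^2"] basics(3)[OF assms(1)] by simp
  then show ?thesis using assms(2) by (simp add: pos_divide_le_eq mult.commute)
qed

lemma tc_nonneg: "TC N M Psi \<ge> 0"
  unfolding TC_def by (intro sum_nonneg) auto

lemma tc_bound:
  assumes "parseval_frame K N M Psi"
  shows "(TC N M Psi)^2 \<le> B2 M N"
proof (cases "M \<le> 1")
  case True
  then have "M * M - M = 0" by (cases M) auto
  then have "offd M = {}" using offd_card[of M] offd_finite[of M] by simp
  then show ?thesis using True basics(1)[OF assms] \<open>M * M - M = 0\<close> unfolding B2_def by simp
next
  case False
  let ?a = "\<lambda>p. cmod (vinner N (Psi (fst p)) (Psi (snd p)))"
  have "(TC N M Psi)^2 = (sum ?a (offd M))^2" using basics(1)[OF assms] by simp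
  also have "\<dots> \<le> real (card (offd M)) * (\<Sum>p\<in>offd M. (?a p)^2)" by (rule cs_le[OF offd_finite])
  also have "\<dots> = real (M * M - M) * (real N - (\<Sum>i<M. ((vnorm N (Psi i))^2)^2))"
    using basics(2)[OF assms] offd_card by simp
  also have "\<dots> \<le> B2 M N" unfolding B2_def
    using powmean[OF assms] False by (intro mult_left_mono) auto
  finally show ?thesis .
qed


lemma vnorm_nn: "vnorm N x \<ge> 0" unfolding vnorm_def by (simp add: sum_nonneg)

lemma tc_eq:
  assumes pf: "parseval_frame K N M Psi" and eq: "(TC N M Psi)^2 = B2 M N"
  shows "equiangular N M Psi"
proof (cases "M \<le> 1")
  case True
  have ij: "i = j" if "i < M" "j < M" for i j using True that by linarith
  have n1: "\<forall>i<M. \<forall>j<M. vnorm N (Psi i) = vnorm N (Psi j)"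
  proof (intro allI impI)
    fix i j assume "i < M" "j < M"
    from ij[OF this] show "vnorm N (Psi i) = vnorm N (Psi j)" by simp
  qed
  have n2: "\<forall>i<M. \<forall>j<M. i \<noteq> j \<longrightarrow> cmod (vinner N (Psi i) (Psi j)) = 0"
    using ij by blast
  have n3: "\<exists>c. \<forall>i<M. \<forall>j<M. i \<noteq> j \<longrightarrow> cmod (vinner N (Psi i) (Psi j)) = c"
    using n2 by (rule exI)
  show ?thesis unfolding equiangular_def by (rule conjI[OF n1 n3])
next
  case False
  let ?a = "\<lambda>p. cmod (vinner N (Psi (fst p)) (Psi (snd p)))"
  let ?d = "\<lambda>i. (vnorm N (Psi i))^2"
  let ?n = "real (M * M - M)"
  have npos: "?n > 0" using False by (cases M) (auto intro: add_pos_nonneg)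
  have cardo: "real (card (offd M)) = ?n" using offd_card by simp
  have ne: "offd M \<noteq> {}" using npos cardo by auto
  have S: "(\<Sum>p\<in>offd M. (?a p)^2) = real N - (\<Sum>i<M. (?d i)^2)" using basics(2)[OF pf] by simp
  have TCs: "TC N M Psi = sum ?a (offd M)" using basics(1)[OF pf] by simp
  have c1: "(sum ?a (offd M))^2 \<le> ?n * (\<Sum>p\<in>offd M. (?a p)^2)"
  proof -
    have "(sum ?a (offd M))^2 \<le> real (card (offd M)) * (\<Sum>p\<in>offd M. (?a p)^2)" by (rule cs_le[OF offd_finite])
    then show ?thesis by (simp only: cardo)
  qed
  have pm: "(real N)^2 / real M \<le> (\<Sum>i<M. (?d i)^2)" using powmean[OF pf] False by simp
  have c2: "?n * (\<Sum>p\<in>offd M. (?a p)^2) \<le> B2 M N" unfolding B2_def S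
    using pm npos by (intro mult_left_mono) auto
  have eqs: "(sum ?a (offd M))^2 = B2 M N" using eq TCs by simp
  have e1: "?n * (\<Sum>p\<in>offd M. (?a p)^2) = B2 M N" using c1 c2 eqs by linarith
  have e2: "(sum ?a (offd M))^2 = ?n * (\<Sum>p\<in>offd M. (?a p)^2)" using c1 c2 eqs by linarith
  have "real N - (\<Sum>i<M. (?d i)^2) = real N - (real N)^2 / real M"
    using e1 npos False unfolding B2_def S by simp
  then have "(\<Sum>i<M. (?d i)^2) = (real N)^2 / real M" by simp
  then have "(sum ?d {..<M})^2 = real (card {..<M}) * (\<Sum>i<M. (?d i)^2)"
    using basics(3)[OF pf] False by simp
  then have dconst: "?d i = sum ?d {..<M} / real (card {..<M})" if "i < M" for i
    using cs_eq[of "{..<M}" ?d] that False by auto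
  have norms: "vnorm N (Psi i) = vnorm N (Psi j)" if "i < M" "j < M" for i j
  proof -
    have "?d i = ?d j" using dconst[OF that(1)] dconst[OF that(2)] by simp
    moreover have "vnorm N (Psi i) \<ge> 0" "vnorm N (Psi j) \<ge> 0" by (simp_all add: vnorm_nn)
    ultimately show ?thesis by (simp add: power2_eq_iff_nonneg)
  qed
  have aconst: "?a p = sum ?a (offd M) / real (card (offd M))" if "p \<in> offd M" for p
    by (rule cs_eq[OF offd_finite ne _ that]) (simp only: e2 cardo)
  have "\<forall>i<M. \<forall>j<M. i \<noteq> j \<longrightarrow> cmod (vinner N (Psi i) (Psi j)) = sum ?a (offd M) / real (card (offd M))"
  proof (intro allI impI)
    fix i j assume "i < M" "j < M" "i \<noteq> j"
    then have "(i, j) \<in> offd M" unfolding offd_def by auto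
    from aconst[OF this] show "cmod (vinner N (Psi i) (Psi j)) = sum ?a (offd M) / real (card (offd M))" by simp
  qed
  then have n3: "\<exists>c. \<forall>i<M. \<forall>j<M. i \<noteq> j \<longrightarrow> cmod (vinner N (Psi i) (Psi j)) = c"
    by (rule exI)
  have n1: "\<forall>i<M. \<forall>j<M. vnorm N (Psi i) = vnorm N (Psi j)" using norms by blast
  show ?thesis unfolding equiangular_def by (rule conjI[OF n1 n3])
qed

lemma eq_tc:
  assumes pf: "parseval_frame K N M Psi" and ea: "equiangular N M Psi"
  shows "(TC N M Psi)^2 = B2 M N"
proof (cases "M = 0")
  case True
  then show ?thesis unfolding B2_def TC_def by simp
next
  case False
  let ?a = "\<lambda>p. cmod (vinner N (Psi (fst p)) (Psi (snd p)))"
  let ?d = "\<lambda>i. (vnorm N (Psi i))^2"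
  let ?n = "real (M * M - M)"
  have cardo: "real (card (offd M)) = ?n" using offd_card by simp
  obtain c where c: "\<forall>i<M. \<forall>j<M. i \<noteq> j \<longrightarrow> cmod (vinner N (Psi i) (Psi j)) = c"
    using ea unfolding equiangular_def by blast
  have nn: "\<forall>i<M. \<forall>j<M. vnorm N (Psi i) = vnorm N (Psi j)"
    using ea unfolding equiangular_def by (rule conjunct1)
  have dd: "?d i = ?d 0" if "i < M" for i
  proof -
    have "vnorm N (Psi i) = vnorm N (Psi 0)" using nn that False by blast
    then show ?thesis by (rule arg_cong)
  qed
  have s1: "(\<Sum>i<M. ?d i) = (\<Sum>i<M. ?d 0)" by (rule sum.cong[OF refl], rule dd, simp)
  have "real N = (\<Sum>i<M. ?d 0)" using basics(3)[OF pf] s1 by simp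
  then have d0: "?d 0 = real N / real M" using False by simp
  have s2: "(\<Sum>i<M. (?d i)^2) = (\<Sum>i<M. (?d 0)^2)"
    by (rule sum.cong[OF refl]) (subst dd, simp_all)
  have sd2: "(\<Sum>i<M. (?d i)^2) = (real N)^2 / real M"
    unfolding s2 d0 using False by (simp add: power2_eq_square)
  have ac: "?a p = c" if "p \<in> offd M" for p
  proof -
    obtain i j where p: "p = (i, j)" by (cases p)
    have "i < M" "j < M" "i \<noteq> j" using that unfolding p offd_def by auto
    then have "cmod (vinner N (Psi i) (Psi j)) = c" using c by blast
    then show ?thesis unfolding p by simp
  qed
  have s3: "sum ?a (offd M) = sum (\<lambda>p. c) (offd M)" by (rule sum.cong[OF refl], rule ac)
  have s4: "(\<Sum>p\<in>offd M. (?a p)^2) = sum (\<lambda>p. c^2) (offd M)" by (rule sum.cong[OF refl]) (simp only: ac)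
  have TCs: "TC N M Psi = ?n * c" using basics(1)[OF pf] s3 cardo by simp
  have Ss: "?n * c^2 = real N - (real N)^2 / real M"
    using basics(2)[OF pf] s4 cardo sd2 by simp
  show ?thesis unfolding TCs B2_def Ss[symmetric] by (simp add: power2_eq_square)
qed

theorem theorem2:
  fixes K :: "complex set" and N M :: nat
  assumes field: "K = \<real> \<or> K = UNIV"
  shows "(\<forall>Phi Psi. parseval_frame K N M Phi \<and> equiangular N M Phi \<and> parseval_frame K N M Psi
            \<longrightarrow> TC N M Psi \<le> TC N M Phi)
       \<and> ((\<exists>Phi. parseval_frame K N M Phi \<and> equiangular N M Phi) \<longrightarrow>
            (\<forall>Psi. (parseval_frame K N M Psi \<and>
                     (\<forall>Psi'. parseval_frame K N M Psi' \<longrightarrow> TC N M Psi' \<le> TC N M Psi))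
                   \<longleftrightarrow> (parseval_frame K N M Psi \<and> equiangular N M Psi))
          \<and> (\<forall>Psi. (parseval_frame K N M Psi \<and>
                     (\<forall>Psi'. parseval_frame K N M Psi' \<longrightarrow> TC_full N M Psi' \<le> TC_full N M Psi))
                   \<longleftrightarrow> (parseval_frame K N M Psi \<and> equiangular N M Psi)))"
proof -
  have P1: "TC N M Psi \<le> TC N M Phi"
    if "parseval_frame K N M Phi" "equiangular N M Phi" "parseval_frame K N M Psi" for Phi Psi
  proof -
    have "(TC N M Psi)^2 \<le> (TC N M Phi)^2"
      using tc_bound[OF that(3)] eq_tc[OF that(1,2)] by simp
    then show ?thesis using tc_nonneg[of N M Phi] by (rule power2_le_imp_le)
  qed
  have P2: "equiangular N M Psi"
    if "parseval_frame K N M Phi" "equiangular N M Phi" "parseval_frame K N M Psi"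
       "TC N M Phi \<le> TC N M Psi" for Phi Psi
  proof -
    have "(TC N M Phi)^2 \<le> (TC N M Psi)^2"
      using that(4) tc_nonneg[of N M Phi] by (simp add: power_mono)
    then have "(TC N M Psi)^2 = B2 M N"
      using tc_bound[OF that(3)] eq_tc[OF that(1,2)] by simp
    then show ?thesis by (rule tc_eq[OF that(3)])
  qed
  have A: "\<forall>Phi Psi. parseval_frame K N M Phi \<and> equiangular N M Phi \<and> parseval_frame K N M Psi
            \<longrightarrow> TC N M Psi \<le> TC N M Phi" using P1 by blast
  have full: "TC_full N M A \<le> TC_full N M B \<longleftrightarrow> TC N M A \<le> TC N M B"
      if "parseval_frame K N M A" "parseval_frame K N M B" for A B
      using basics(4)[OF that(1)] basics(4)[OF that(2)] by simp
  have B: "(\<exists>Phi. parseval_frame K N M Phi \<and> equiangular N M Phi) \<longrightarrow>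
            (\<forall>Psi. (parseval_frame K N M Psi \<and>
                     (\<forall>Psi'. parseval_frame K N M Psi' \<longrightarrow> TC N M Psi' \<le> TC N M Psi))
                   \<longleftrightarrow> (parseval_frame K N M Psi \<and> equiangular N M Psi))
          \<and> (\<forall>Psi. (parseval_frame K N M Psi \<and>
                     (\<forall>Psi'. parseval_frame K N M Psi' \<longrightarrow> TC_full N M Psi' \<le> TC_full N M Psi))
                   \<longleftrightarrow> (parseval_frame K N M Psi \<and> equiangular N M Psi))"
  proof
    assume "\<exists>Phi. parseval_frame K N M Phi \<and> equiangular N M Phi"
    then obtain Phi where Phi: "parseval_frame K N M Phi" "equiangular N M Phi" by blast
    show "(\<forall>Psi. (parseval_frame K N M Psi \<and>
                     (\<forall>Psi'. parseval_frame K N M Psi' \<longrightarrow> TC N M Psi' \<le> TC N M Psi))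
                   \<longleftrightarrow> (parseval_frame K N M Psi \<and> equiangular N M Psi))
          \<and> (\<forall>Psi. (parseval_frame K N M Psi \<and>
                     (\<forall>Psi'. parseval_frame K N M Psi' \<longrightarrow> TC_full N M Psi' \<le> TC_full N M Psi))
                   \<longleftrightarrow> (parseval_frame K N M Psi \<and> equiangular N M Psi))"
      using P1 P2[OF Phi] Phi full by blast
  qed
  show ?thesis using A B by (rule conjI)
qed

end
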